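(* Let $R_0^*\in SO(3)$ with unit quaternion representation $w_0^*\in\mathbb{S}^3$, let $1\le k^*<\ell$, let $(y_i,x_i)$ satisfy $y_i=R_0^*x_i$ for $i=1,\dots,k^*$, and let $c_1^2,\dots,c_\ell^2\ge 0$ with $\sum_{i=1}^{k^*}c_i^2>0$. Suppose the outliers are clustered: there is $w_0^{\mathrm{cl}}\in\mathbb{S}^3$ with $w_0^{\mathrm{cl}}\ne\pm w_0^*$ such that $Q_{k^*+1}w_0^{\mathrm{cl}}=\cdots=Q_\ell w_0^{\mathrm{cl}}=0$. Let $\omega^*=[w_0^*;\dots;w_0^*;0;\dots;0]\in\mathbb{R}^{4(\ell+1)}$ with $w_0^*$ appearing $k^*+1$ times, and $\mathcal{W}^*=\omega^*(\omega^* )^\top$. If $$1-\frac{\sum_{j=k^*+1}^{\ell}c_j^2}{2\sum_{i=1}^{k^*}c_i^2}<\big|(w_0^{\mathrm{cl}})^\top w_0^*\big|,$$ then $\mathcal{W}^*$ does not globally minimize (SDR).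
   Context: For $w=[w_1;w_2;w_3;w_4]\in\mathbb{S}^3$, $R(w)=\begin{bmatrix} w_1^2+w_2^2-w_3^2-w_4^2 & 2(w_2w_3-w_1w_4) & 2(w_2w_4+w_1w_3)\\ 2(w_2w_3+w_1w_4) & w_1^2+w_3^2-w_2^2-w_4^2 & 2(w_3w_4-w_1w_2)\\ 2(w_2w_4-w_1w_3) & 2(w_3w_4+w_1w_2) & w_1^2+w_4^2-w_2^2-w_3^2\end{bmatrix}\in SO(3)$; $\pm w$ are the unit quaternion representations of $R(w)$. $Q_i$ is the unique symmetric $4\times4$ matrix with $w^\top Q_iw=\|y_i-R(w)x_i\|_2^2$ for all $w\in\mathbb{S}^3$. For $\mathcal{A}\in\mathbb{R}^{4(\ell+1)\times4(\ell+1)}$, $[\mathcal{A}]_{ij}$ ($0\le i,j\le\ell$) is the $4\times4$ block in rows $4i+1..4i+4$, columns $4j+1..4j+4$. $\mathcal{Q}$ is symmetric with $[\mathcal{Q}]_{0i}=[\mathcal{Q}]_{i0}=\frac12(Q_i-c_i^2I_4)$ ($i\ge1$), other blocks zero. (SDR): minimize $\operatorname{tr}(\mathcal{Q}\mathcal{W})+\sum_ic_i^2$ over symmetric $\mathcal{W}\succeq0$ s.t. $[\mathcal{W}]_{0i}=[\mathcal{W}]_{ii}$ ($i=1..\ell$), $\operatorname{tr}([\mathcal{W}]_{00})=1$. *)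

theory Defs
  imports "HOL-Analysis.Analysis"
begin

definition rot_entry :: "real^4 \<Rightarrow> 3 \<Rightarrow> 3 \<Rightarrow> real" where
  "rot_entry w i j =
    (let w1 = w$1; w2 = w$2; w3 = w$3; w4 = w$4 in
     if i = 1 then
       (if j = 1 then w1^2 + w2^2 - w3^2 - w4^2
        else if j = 2 then 2*(w2*w3 - w1*w4)
        else 2*(w2*w4 + w1*w3))
     else if i = 2 then
       (if j = 1 then 2*(w2*w3 + w1*w4)
        else if j = 2 then w1^2 + w3^2 - w2^2 - w4^2
        else 2*(w3*w4 - w1*w2))
     else
       (if j = 1 then 2*(w2*w4 - w1*w3)
        else if j = 2 then 2*(w3*w4 + w1*w2)
        else w1^2 + w4^2 - w2^2 - w3^2))"

definition quat_rot :: "real^4 \<Rightarrow> real^3^3" where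
  "quat_rot w = (\<chi> i j. rot_entry w i j)"

definition Qmat :: "real^3 \<Rightarrow> real^3 \<Rightarrow> real^4^4" where
  "Qmat y x = (THE Q. transpose Q = Q \<and>
      (\<forall>w::real^4. norm w = 1 \<longrightarrow> w \<bullet> (Q *v w) = (norm (y - quat_rot w *v x))^2))"

definition idx4 :: "nat \<Rightarrow> 4" where
  "idx4 r = (if r = 0 then 1 else if r = 1 then 2 else if r = 2 then 3 else 4)"

definition ent4 :: "real^4^4 \<Rightarrow> nat \<Rightarrow> nat \<Rightarrow> real" where
  "ent4 M r s = M $ idx4 r $ idx4 s"

definition comp4 :: "real^4 \<Rightarrow> nat \<Rightarrow> real" where
  "comp4 w r = w $ idx4 r"

text \<open>Matrices of size 4(l+1) are functions nat \<Rightarrow> nat \<Rightarrow> real, only entries with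
  indices < 4(l+1) matter (0-based; block (p,q) has rows 4p..4p+3, cols 4q..4q+3).
  c i stands for c_i^2, Qf i for Q_i.\<close>

definition sdr_Q :: "nat \<Rightarrow> (nat \<Rightarrow> real) \<Rightarrow> (nat \<Rightarrow> real^4^4) \<Rightarrow> nat \<Rightarrow> nat \<Rightarrow> real" where
  "sdr_Q l c Qf a b =
    (let p = a div 4; q = b div 4; r = a mod 4; s = b mod 4 in
     if p = 0 \<and> 1 \<le> q \<and> q \<le> l then (ent4 (Qf q) r s - c q * (if r = s then 1 else 0)) / 2
     else if q = 0 \<and> 1 \<le> p \<and> p \<le> l then (ent4 (Qf p) r s - c p * (if r = s then 1 else 0)) / 2
     else 0)"

definition sdr_obj :: "nat \<Rightarrow> (nat \<Rightarrow> real) \<Rightarrow> (nat \<Rightarrow> real^4^4) \<Rightarrow> (nat \<Rightarrow> nat \<Rightarrow> real) \<Rightarrow> real" where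
  "sdr_obj l c Qf W =
    (\<Sum>a<4*(l+1). \<Sum>b<4*(l+1). sdr_Q l c Qf a b * W b a) + (\<Sum>i=1..l. c i)"

definition sdr_feasible :: "nat \<Rightarrow> (nat \<Rightarrow> nat \<Rightarrow> real) \<Rightarrow> bool" where
  "sdr_feasible l W \<longleftrightarrow>
    (\<forall>a<4*(l+1). \<forall>b<4*(l+1). W a b = W b a) \<and>
    (\<forall>v::nat \<Rightarrow> real. (\<Sum>a<4*(l+1). \<Sum>b<4*(l+1). v a * W a b * v b) \<ge> 0) \<and>
    (\<forall>i\<in>{1..l}. \<forall>r<4. \<forall>s<4. W r (4*i+s) = W (4*i+r) (4*i+s)) \<and>
    (\<Sum>r<4. W r r) = 1"

definition sdr_global_min :: "nat \<Rightarrow> (nat \<Rightarrow> real) \<Rightarrow> (nat \<Rightarrow> real^4^4) \<Rightarrow> (nat \<Rightarrow> nat \<Rightarrow> real) \<Rightarrow> bool" where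
  "sdr_global_min l c Qf W \<longleftrightarrow>
    sdr_feasible l W \<and> (\<forall>V. sdr_feasible l V \<longrightarrow> sdr_obj l c Qf W \<le> sdr_obj l c Qf V)"

definition omega_star :: "real^4 \<Rightarrow> nat \<Rightarrow> nat \<Rightarrow> real" where
  "omega_star w0 k a = (if a div 4 \<le> k then comp4 w0 (a mod 4) else 0)"

definition W_star :: "real^4 \<Rightarrow> nat \<Rightarrow> nat \<Rightarrow> nat \<Rightarrow> real" where
  "W_star w0 k a b = omega_star w0 k a * omega_star w0 k b"

end

theory Submission
  imports Defs
begin

lemma sum_blocks: "(\<Sum>a<4*m. f a) = (\<Sum>p<m. \<Sum>r<4. f (4*p+r::nat)::real)"
proof -
  have "(\<Sum>a<4*m. f a) = (\<Sum>p<m. sum f {p*4..<p*4+4})"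
    using sum.nat_group[of f 4 m] by (simp add: mult.commute)
  also have "\<dots> = (\<Sum>p<m. \<Sum>r<4. f (4*p+r))"
  proof (rule sum.cong[OF refl])
    fix p
    have "sum f {p*4..<p*4+4} = sum f {0+p*4..<4+p*4}" by (simp add: add.commute)
    also have "\<dots> = (\<Sum>r=0..<4. f (r+p*4))"
      by (rule sum.shift_bounds_nat_ivl)
    finally show "sum f {p*4..<p*4+4} = (\<Sum>r<4. f (4*p+r))"
      by (simp add: atLeast0LessThan mult.commute add.commute)
  qed
  finally show ?thesis .
qed

lemma rot_norm: "norm (quat_rot w *v x)^2 = (w \<bullet> w)^2 * (norm x)^2"
  unfolding quat_rot_def rot_entry_def power2_norm_eq_inner inner_vec_def matrix_vector_mult_def
  by (simp add: sum_3 sum_4 Let_def power2_eq_square algebra_simps)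

definition ff :: "real^3 \<Rightarrow> real^3 \<Rightarrow> real^4 \<Rightarrow> real" where
 "ff y x w = (norm y ^2 + norm x ^2) * (w \<bullet> w) - 2 * (y \<bullet> (quat_rot w *v x))"
definition Qp :: "real^3 \<Rightarrow> real^3 \<Rightarrow> real^4^4" where
 "Qp y x = (\<chi> a b. (ff y x (axis a 1 + axis b 1) - ff y x (axis a 1) - ff y x (axis b 1)) / 2)"

lemma Qp_form: "w \<bullet> (Qp y x *v w) = ff y x w"
  unfolding Qp_def ff_def quat_rot_def rot_entry_def inner_vec_def matrix_vector_mult_def
  apply (simp add: sum_3 sum_4 Let_def axis_def)
  by (simp add: field_simps power2_eq_square)

lemma Qp_sym: "transpose (Qp y x) = Qp y x"
  unfolding Qp_def transpose_def by (simp add: vec_eq_iff add.commute)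

lemma ff_eq: "norm w = 1 \<Longrightarrow> ff y x w = norm (y - quat_rot w *v x)^2"
proof -
  assume w: "norm w = 1"
  have ww: "w \<bullet> w = 1" using w by (simp add: power2_norm_eq_inner[symmetric])
  have "norm (y - quat_rot w *v x)^2 = norm y^2 - 2*(y \<bullet> (quat_rot w *v x)) + norm (quat_rot w *v x)^2"
    by (simp add: power2_norm_eq_inner inner_diff_left inner_diff_right inner_commute)
  then show ?thesis using rot_norm[of w x] ww by (simp add: ff_def)
qed

lemma axis_form: "axis a 1 \<bullet> (D *v axis b (1::real)) = (D::real^4^4) $ a $ b"
  unfolding inner_vec_def matrix_vector_mult_def axis_def
  apply (simp add: if_distrib[where f="\<lambda>x. x * _"] cong: if_cong)
  apply (subst sum.cong[OF refl, where h="\<lambda>j. if j = b then D$a$j else 0"])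
  by auto

lemma quad_zero:
  fixes D :: "real^4^4"
  assumes sym: "transpose D = D" and z: "\<forall>w. norm w = 1 \<longrightarrow> w \<bullet> (D *v w) = 0"
  shows "D = 0"
proof -
  have all: "w \<bullet> (D *v w) = 0" for w
  proof (cases "w = 0")
    case True then show ?thesis by simp
  next
    case False
    define u where "u = (1/norm w) *\<^sub>R w"
    have nu: "norm u = 1" using False by (simp add: u_def)
    have "w = norm w *\<^sub>R u" using False by (simp add: u_def)
    then have "w \<bullet> (D *v w) = (norm w)^2 * (u \<bullet> (D *v u))"
      by (metis (no_types, lifting) inner_scaleR_left inner_scaleR_right matrix_vector_mult_scaleR
          mult.assoc power2_eq_square)
    then show ?thesis using z nu by simp
  qed
  have "D $ a $ b = 0" for a b
  proof -
    have s: "D $ a $ b = D $ b $ a"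
    proof -
      have "transpose D $ a $ b = D $ a $ b" using sym by simp
      then show ?thesis by (simp add: transpose_def)
    qed
    have "(axis a 1 + axis b 1) \<bullet> (D *v (axis a 1 + axis b (1::real))) = 0" by (rule all)
    then have "D$a$a + D$a$b + D$b$a + D$b$b = 0"
      by (simp add: matrix_vector_right_distrib inner_add_left inner_add_right axis_form)
    moreover have "D$a$a = 0" using all[of "axis a 1"] axis_form[of a D a] by simp
    moreover have "D$b$b = 0" using all[of "axis b 1"] axis_form[of b D b] by simp
    ultimately show ?thesis using s by simp
  qed
  then show ?thesis by (simp add: vec_eq_iff)
qed

lemma Qmat_prop: "transpose (Qmat y x) = Qmat y x \<and>
   (\<forall>w::real^4. norm w = 1 \<longrightarrow> w \<bullet> (Qmat y x *v w) = (norm (y - quat_rot w *v x))^2)"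
proof -
  let ?P = "\<lambda>Q. transpose Q = Q \<and>
      (\<forall>w::real^4. norm w = 1 \<longrightarrow> w \<bullet> (Q *v w) = (norm (y - quat_rot w *v x))^2)"
  have ex: "?P (Qp y x)" using Qp_sym Qp_form ff_eq by simp
  have un: "Q = Qp y x" if "?P Q" for Q
  proof -
    have "Q - Qp y x = 0"
    proof (rule quad_zero)
      show "transpose (Q - Qp y x) = Q - Qp y x"
        using that Qp_sym by (simp add: transpose_def vec_eq_iff)
      show "\<forall>w. norm w = 1 \<longrightarrow> w \<bullet> ((Q - Qp y x) *v w) = 0"
        using that ex by (simp add: matrix_vector_mult_diff_rdistrib inner_diff_right)
    qed
    then show ?thesis by simp
  qed
  have "\<exists>!Q. ?P Q" using ex un by blast
  then show ?thesis unfolding Qmat_def by (rule theI')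
qed

lemma divmod4: "r < 4 \<Longrightarrow> (4*p+r) div 4 = p \<and> (4*p+r) mod 4 = (r::nat)"
  by auto

lemma obj_formula:
  assumes symW: "\<forall>a b. W a b = W b a" and symQ: "\<forall>i. transpose (Qf i) = Qf i"
  shows "sdr_obj l c Qf W = (\<Sum>i=1..l. \<Sum>r<4. \<Sum>s<4.
      (ent4 (Qf i) r s - c i * (if r=s then 1 else 0)) * W (4*i+s) r) + (\<Sum>i=1..l. c i)"
proof -
  define h where "h i r s = (ent4 (Qf i) r s - c i * (if r=s then 1 else 0))/2" for i r s
  have hs: "h i r s = h i s r" for i r s
  proof -
    have "(Qf i) $ a $ b = (Qf i) $ b $ a" for a b
    proof -
      have "transpose (Qf i) $ a $ b = (Qf i) $ a $ b" using symQ by simp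
      then show ?thesis by (simp add: transpose_def)
    qed
    then show ?thesis unfolding h_def ent4_def by auto
  qed
  have e: "sdr_Q l c Qf (4*p+r) (4*q+s) = (if p=0 \<and> 1\<le>q \<and> q\<le>l then h q r s
      else if q=0 \<and> 1\<le>p \<and> p\<le>l then h p r s else 0)" if "r<4" "s<4" for p q r s
    using that divmod4[of r p] divmod4[of s q] by (simp add: sdr_Q_def h_def Let_def)
  have "(\<Sum>a<4*(l+1). \<Sum>b<4*(l+1). sdr_Q l c Qf a b * W b a)
     = (\<Sum>p<l+1. \<Sum>r<4. \<Sum>q<l+1. \<Sum>s<4. sdr_Q l c Qf (4*p+r) (4*q+s) * W (4*q+s) (4*p+r))"
    by (simp only: sum_blocks)
  also have "\<dots> = (\<Sum>p<l+1. \<Sum>r<4. \<Sum>q<l+1. \<Sum>s<4. (if p=0 \<and> 1\<le>q \<and> q\<le>l then h q r s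
      else if q=0 \<and> 1\<le>p \<and> p\<le>l then h p r s else 0) * W (4*q+s) (4*p+r))"
    by (intro sum.cong refl) (simp add: e)
  also have "\<dots> = (\<Sum>r<4. \<Sum>q<l. \<Sum>s<4. h (Suc q) r s * W (4*Suc q+s) r)
      + (\<Sum>p<l. \<Sum>r<4. \<Sum>s<4. h (Suc p) r s * W s (4*Suc p+r))"
    by (simp add: sum.lessThan_Suc_shift del: sum.lessThan_Suc)
  also have "(\<Sum>p<l. \<Sum>r<4. \<Sum>s<4. h (Suc p) r s * W s (4*Suc p+r))
      = (\<Sum>p<l. \<Sum>r<4. \<Sum>s<4. h (Suc p) r s * W (4*Suc p+s) r)"
  proof (rule sum.cong[OF refl])
    fix p
    have "(\<Sum>r<4. \<Sum>s<4. h (Suc p) r s * W s (4*Suc p+r)) = (\<Sum>s<4. \<Sum>r<4. h (Suc p) r s * W s (4*Suc p+r))"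
      by (rule sum.swap)
    also have "\<dots> = (\<Sum>s<4. \<Sum>r<4. h (Suc p) s r * W (4*Suc p+r) s)"
      by (intro sum.cong refl) (metis hs symW)
    finally show "(\<Sum>r<4. \<Sum>s<4. h (Suc p) r s * W s (4*Suc p+r)) = (\<Sum>r<4. \<Sum>s<4. h (Suc p) r s * W (4*Suc p+s) r)" .
  qed
  also have "(\<Sum>r<4. \<Sum>q<l. \<Sum>s<4. h (Suc q) r s * W (4*Suc q+s) r) = (\<Sum>q<l. \<Sum>r<4. \<Sum>s<4. h (Suc q) r s * W (4*Suc q+s) r)"
    by (rule sum.swap)
  also have "\<dots> + (\<Sum>p<l. \<Sum>r<4. \<Sum>s<4. h (Suc p) r s * W (4*Suc p+s) r)
     = (\<Sum>i=1..l. \<Sum>r<4. \<Sum>s<4. (ent4 (Qf i) r s - c i * (if r=s then 1 else 0)) * W (4*i+s) r)"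
    apply (simp add: sum.atLeast1_atMost_eq h_def sum.distrib[symmetric])
    apply (intro sum.cong refl)
    by (simp add: field_simps)
  finally show ?thesis unfolding sdr_obj_def by simp
qed

lemma sum4: "(\<Sum>r<4. f r) = f 0 + f 1 + f 2 + (f (3::nat)::real)"
  by (simp add: eval_nat_numeral)

lemma comp4_inner: "(\<Sum>r<4. comp4 a r * comp4 b r) = a \<bullet> b"
  by (simp add: sum4 comp4_def idx4_def inner_vec_def sum_4)

lemma blockval:
  "(\<Sum>r<4. \<Sum>s<4. (ent4 Q r s - cc * (if r=s then 1 else 0)) * (\<kappa> * comp4 z s * comp4 z r))
    = \<kappa> * (z \<bullet> (Q *v z) - cc * (z \<bullet> z))"
  by (simp add: sum4 ent4_def comp4_def idx4_def inner_vec_def sum_4 matrix_vector_mult_def algebra_simps)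

lemma obj_kappa:
  assumes symW: "\<forall>a b. W a b = W b a" and symQ: "\<forall>i. transpose (Qf i) = Qf i"
    and blk: "\<forall>i\<in>{1..l}. \<forall>r<4. \<forall>s<4. W (4*i+s) r = \<kappa> i * comp4 (z i) s * comp4 (z i) r"
  shows "sdr_obj l c Qf W = (\<Sum>i=1..l. \<kappa> i * (z i \<bullet> (Qf i *v z i) - c i * (z i \<bullet> z i))) + (\<Sum>i=1..l. c i)"
proof -
  have "(\<Sum>i=1..l. \<Sum>r<4. \<Sum>s<4. (ent4 (Qf i) r s - c i * (if r=s then 1 else 0)) * W (4*i+s) r)
      = (\<Sum>i=1..l. \<kappa> i * (z i \<bullet> (Qf i *v z i) - c i * (z i \<bullet> z i)))"
  proof (rule sum.cong[OF refl])
    fix i assume i: "i \<in> {1..l}"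
    have "(\<Sum>r<4. \<Sum>s<4. (ent4 (Qf i) r s - c i * (if r=s then 1 else 0)) * W (4*i+s) r)
      = (\<Sum>r<4. \<Sum>s<4. (ent4 (Qf i) r s - c i * (if r=s then 1 else 0)) * (\<kappa> i * comp4 (z i) s * comp4 (z i) r))"
      using blk i by (intro sum.cong refl) simp
    also have "\<dots> = \<kappa> i * (z i \<bullet> (Qf i *v z i) - c i * (z i \<bullet> z i))" by (rule blockval)
    finally show "(\<Sum>r<4. \<Sum>s<4. (ent4 (Qf i) r s - c i * (if r=s then 1 else 0)) * W (4*i+s) r)
      = \<kappa> i * (z i \<bullet> (Qf i *v z i) - c i * (z i \<bullet> z i))" .
  qed
  then show ?thesis using obj_formula[OF symW symQ] by simp
qed

lemma psd_gram:
  "(\<Sum>a\<in>A. \<Sum>b\<in>A. v a * ((g a * g b + h a * h b) / T) * v b)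
     = ((\<Sum>a\<in>A. v a * g a)^2 + (\<Sum>a\<in>A. v a * h a)^2) / (T::real)"
  by (simp add: power2_eq_square sum_product sum_divide_distrib sum.distrib[symmetric] field_simps)

lemma final_ineq:
  fixes \<rho> Cin Cout :: real
  assumes "0 \<le> \<rho>" "\<rho> < 1" "Cin > 0" "1 - Cout / (2*Cin) < \<rho>"
  shows "- Cin / (1 + (1-\<rho>)^2 * (1 - \<rho>^2)) - (1-\<rho>)^2 * Cout / ((1 + (1-\<rho>)^2*\<rho>^2) * (1 + (1-\<rho>)^2 * (1 - \<rho>^2))) < - Cin"
proof -
  define g where "g = 1 - \<rho>"
  have g0: "g > 0" using assms g_def by simp
  define N where "N = 1 + g^2*\<rho>^2"
  define T where "T = 1 + g^2 * (1 - \<rho>^2)"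
  have N0: "N > 0" unfolding N_def by (simp add: add_pos_nonneg)
  have T0: "T > 0" unfolding T_def using assms by (simp add: add_pos_nonneg power_le_one abs_le_iff)
  have h1: "2*(1-\<rho>)*Cin < Cout" using assms by (simp add: field_simps)
  have h2: "N * (1 - \<rho>^2) \<le> 2*(1-\<rho>)"
  proof -
    have "\<rho>^2 * (1 - \<rho>^2) \<le> 1"
      using assms by (simp add: mult_le_one power_le_one)
    then have "(1+\<rho>)*\<rho>^2*(1-\<rho>) \<le> 1" by (simp add: algebra_simps power2_eq_square)
    then have "(1+\<rho>)*\<rho>^2*(1-\<rho>)*(1-\<rho>) \<le> 1*(1-\<rho>)" using assms by (intro mult_right_mono) auto
    then have "(1+\<rho>)*\<rho>^2*(1-\<rho>)*(1-\<rho>)*(1-\<rho>) \<le> (1-\<rho>)*(1-\<rho>)" using assms by (intro mult_right_mono) auto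
    then show ?thesis unfolding N_def g_def by (simp add: algebra_simps power2_eq_square)
  qed
  have h3: "N * (1 - \<rho>^2) * Cin < Cout"
    using h1 h2 assms(3) by (smt (verit) mult_right_mono)
  have "g^2 * (N * (1 - \<rho>^2) * Cin) < g^2 * Cout" using h3 g0 by simp
  then have "Cin * N * T < Cin * N + g^2 * Cout" unfolding T_def by (simp add: algebra_simps)
  then have "Cin < Cin / T + g^2 * Cout / (N*T)" using N0 T0 by (simp add: field_simps)
  then show ?thesis unfolding g_def[symmetric] N_def[symmetric] T_def[symmetric] by simp
qed

lemma blk_alg:
  fixes g \<rho> N T ar br bs :: real
  assumes "N = 1 + g^2*\<rho>^2"
  shows "(ar*(g*g*\<rho>/N*bs) + g*(br - \<rho>*ar)*(g/N*bs))/T = g^2/(N*T) * bs * br"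
    and "((g*g*\<rho>/N*br)*(g*g*\<rho>/N*bs) + (g/N*br)*(g/N*bs))/T = g^2/(N*T) * bs * br"
    and "((g*g*\<rho>/N*bs)*ar + (g/N*bs)*(g*(br - \<rho>*ar)))/T = g^2/(N*T) * bs * br"
proof -
  have N0: "N > 0" using assms by (simp add: add_pos_nonneg)
  show "(ar*(g*g*\<rho>/N*bs) + g*(br - \<rho>*ar)*(g/N*bs))/T = g^2/(N*T) * bs * br"
    using N0 by (simp add: field_simps power2_eq_square)
  show "((g*g*\<rho>/N*bs)*ar + (g/N*bs)*(g*(br - \<rho>*ar)))/T = g^2/(N*T) * bs * br"
    using N0 by (simp add: field_simps power2_eq_square)
  have "(g*g*\<rho>/N*br)*(g*g*\<rho>/N*bs) + (g/N*br)*(g/N*bs) = g^2 * bs * br * (1 + g^2*\<rho>^2) / (N*N)"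
    using N0 by (simp add: field_simps power2_eq_square)
  also have "\<dots> = g^2 * bs * br * N / (N*N)" using assms by simp
  also have "\<dots> = g^2 * bs * br / N" using N0 by simp
  finally show "((g*g*\<rho>/N*br)*(g*g*\<rho>/N*bs) + (g/N*br)*(g/N*bs))/T = g^2/(N*T) * bs * br"
    by simp
qed

lemma split_sum: "(k::nat) < l \<Longrightarrow> (\<Sum>i=1..l. f i) = (\<Sum>i=1..k. f i) + (\<Sum>i=k+1..l. (f i::real))"
  using sum.ub_add_nat[of 1 k f "l-k"] by simp

lemma unit_inner: "norm w = 1 \<Longrightarrow> w \<bullet> w = 1"
  by (metis norm_eq_sqrt_inner real_sqrt_eq_1_iff)

theorem theorem3p4:
  fixes w0s wcl :: "real^4" and k l :: nat
    and x y :: "nat \<Rightarrow> real^3" and c :: "nat \<Rightarrow> real"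
  assumes "norm w0s = 1"
    and "1 \<le> k" and "k < l"
    and "\<forall>i\<in>{1..k}. y i = quat_rot w0s *v x i"
    and "\<forall>i\<in>{1..l}. c i \<ge> 0"
    and "(\<Sum>i=1..k. c i) > 0"
    and "norm wcl = 1" and "wcl \<noteq> w0s" and "wcl \<noteq> - w0s"
    and "\<forall>j\<in>{k+1..l}. Qmat (y j) (x j) *v wcl = 0"
    and "1 - (\<Sum>j=k+1..l. c j) / (2 * (\<Sum>i=1..k. c i)) < \<bar>wcl \<bullet> w0s\<bar>"
  shows "\<not> sdr_global_min l c (\<lambda>i. Qmat (y i) (x i)) (W_star w0s k)"
proof
  define Qf where "Qf = (\<lambda>i. Qmat (y i) (x i))"
  assume "sdr_global_min l c (\<lambda>i. Qmat (y i) (x i)) (W_star w0s k)"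
  then have gm: "sdr_global_min l c Qf (W_star w0s k)" unfolding Qf_def .
  have symQ: "\<forall>i. transpose (Qf i) = Qf i" using Qmat_prop unfolding Qf_def by blast
  define u where "u = w0s"
  define v where "v = (if wcl \<bullet> w0s \<ge> 0 then wcl else - wcl)"
  define \<rho> where "\<rho> = v \<bullet> u"
  define Cin where "Cin = (\<Sum>i=1..k. c i)"
  define Cout where "Cout = (\<Sum>j=k+1..l. c j)"
  have \<rho>abs: "\<rho> = \<bar>wcl \<bullet> w0s\<bar>" by (simp add: \<rho>_def v_def u_def)
  have nu: "norm u = 1" using assms(1) u_def by simp
  have nv: "norm v = 1" using assms(7) v_def by simp
  have uu: "u \<bullet> u = 1" using nu by (rule unit_inner)
  have vv: "v \<bullet> v = 1" using nv by (rule unit_inner)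
  have \<rho>0: "0 \<le> \<rho>" using \<rho>abs by simp
  have \<rho>1: "\<rho> < 1"
  proof (rule ccontr)
    assume "\<not> \<rho> < 1"
    moreover have "\<rho> \<le> 1" using norm_cauchy_schwarz[of v u] nu nv \<rho>_def by simp
    ultimately have "\<rho> = 1" by simp
    then have "(v - u) \<bullet> (v - u) = 0"
      using uu vv \<rho>_def by (simp add: inner_diff_left inner_diff_right inner_commute)
    then have "v = u" by simp
    then show False using assms(8,9) unfolding v_def u_def by (auto split: if_splits)
  qed
  have Qv: "Qf j *v v = 0" if "j \<in> {k+1..l}" for j
  proof -
    have "Qf j *v wcl = 0" using assms(10) that Qf_def by simp
    moreover have "Qf j *v (- wcl) = - (Qf j *v wcl)"
      by (simp add: vec_eq_iff matrix_vector_mult_def sum_negf)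
    ultimately show ?thesis by (simp add: v_def)
  qed
  have Qu: "u \<bullet> (Qf i *v u) = 0" if "i \<in> {1..k}" for i
    using Qmat_prop[of "y i" "x i"] nu assms(4) that unfolding Qf_def u_def by simp
  define g where "g = 1 - \<rho>"
  define N where "N = 1 + g^2*\<rho>^2"
  define T where "T = 1 + g^2 * (1 - \<rho>^2)"
  have N0: "N > 0" unfolding N_def by (simp add: add_pos_nonneg)
  have T0: "T > 0" unfolding T_def using \<rho>0 \<rho>1 by (simp add: add_pos_nonneg power_le_one abs_le_iff)
  define q where "q = g *\<^sub>R (v - \<rho> *\<^sub>R u)"
  have qc: "comp4 q r = g * (comp4 v r - \<rho> * comp4 u r)" for r
    by (simp add: q_def comp4_def algebra_simps)
  have qq: "q \<bullet> q = g^2 * (1 - \<rho>^2)"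
    using uu vv \<rho>_def unfolding q_def
    by (simp add: inner_diff_left inner_diff_right inner_commute power2_eq_square algebra_simps)
  define G1 where "G1 a = (if a div 4 = 0 then comp4 u (a mod 4) else if a div 4 \<le> k then comp4 u (a mod 4)
     else if a div 4 \<le> l then g*g*\<rho>/N * comp4 v (a mod 4) else 0)" for a
  define G2 where "G2 a = (if a div 4 = 0 then comp4 q (a mod 4) else if a div 4 \<le> k then 0
     else if a div 4 \<le> l then g/N * comp4 v (a mod 4) else 0)" for a
  define V where "V a b = (G1 a * G1 b + G2 a * G2 b) / T" for a b
  have G1r: "G1 r = comp4 u r" "G2 r = comp4 q r" if "r < 4" for r
    using that by (simp_all add: G1_def G2_def)
  have G1i: "G1 (4*i+r) = (if i \<le> k then comp4 u r else g*g*\<rho>/N * comp4 v r)"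
     "G2 (4*i+r) = (if i \<le> k then 0 else g/N * comp4 v r)" if "r < 4" "1 \<le> i" "i \<le> l" for i r
    using that divmod4[of r i] by (simp_all add: G1_def G2_def)
  have feas: "sdr_feasible l V"
    unfolding sdr_feasible_def
  proof (intro conjI allI impI ballI)
    fix a b show "V a b = V b a" by (simp add: V_def mult.commute)
  next
    fix vv :: "nat \<Rightarrow> real"
    show "0 \<le> (\<Sum>a<4*(l+1). \<Sum>b<4*(l+1). vv a * V a b * vv b)"
      unfolding V_def psd_gram using T0 by simp
  next
    fix i r s :: nat assume i: "i \<in> {1..l}" and r: "r < 4" and s: "s < 4"
    show "V r (4*i+s) = V (4*i+r) (4*i+s)"
    proof (cases "i \<le> k")
      case True then show ?thesis using i r s G1r G1i by (simp add: V_def)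
    next
      case False
      have i1: "1 \<le> i" "i \<le> l" using i by auto
      have e: "G1 r = comp4 u r" "G2 r = g * (comp4 v r - \<rho> * comp4 u r)"
        "G1 (4*i+s) = g*g*\<rho>/N * comp4 v s" "G2 (4*i+s) = g/N * comp4 v s"
        "G1 (4*i+r) = g*g*\<rho>/N * comp4 v r" "G2 (4*i+r) = g/N * comp4 v r"
        using G1r[OF r] qc G1i[OF s i1] G1i[OF r i1] False by auto
      show ?thesis unfolding V_def e blk_alg(1,2)[OF N_def] ..
    qed
  next
    have "(\<Sum>r<4. V r r) = (\<Sum>r<4. comp4 u r * comp4 u r + comp4 q r * comp4 q r) / T"
      by (simp add: V_def G1r sum_divide_distrib)
    also have "\<dots> = (u \<bullet> u + q \<bullet> q) / T" by (simp add: sum.distrib comp4_inner)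
    also have "\<dots> = 1" using uu qq T0 by (simp add: T_def)
    finally show "(\<Sum>r::nat<4. V r r) = 1" .
  qed
  have objW: "sdr_obj l c Qf (W_star w0s k) = - Cin + (\<Sum>i=1..l. c i)"
  proof -
    have "sdr_obj l c Qf (W_star w0s k) = (\<Sum>i=1..l. (if i \<le> k then 1 else 0) * (u \<bullet> (Qf i *v u) - c i * (u \<bullet> u))) + (\<Sum>i=1..l. c i)"
    proof (rule obj_kappa[OF _ symQ])
      show "\<forall>a b. W_star w0s k a b = W_star w0s k b a" by (simp add: W_star_def mult.commute)
      show "\<forall>i\<in>{1..l}. \<forall>r<4. \<forall>s<4. W_star w0s k (4*i+s) r = (if i \<le> k then 1 else 0) * comp4 u s * comp4 u r"
        using divmod4 by (simp add: W_star_def omega_star_def u_def)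
    qed
    also have "(\<Sum>i=1..l. (if i \<le> k then 1 else 0) * (u \<bullet> (Qf i *v u) - c i * (u \<bullet> u))) = - Cin"
      using split_sum[OF assms(3)] Qu uu by (simp add: Cin_def sum_negf)
    finally show ?thesis .
  qed
  have objV: "sdr_obj l c Qf V = - Cin / T - g^2 * Cout / (N*T) + (\<Sum>i=1..l. c i)"
  proof -
    let ?\<kappa> = "\<lambda>i. if i \<le> k then 1/T else g^2/(N*T)"
    let ?z = "\<lambda>i. if i \<le> k then u else v"
    have "sdr_obj l c Qf V = (\<Sum>i=1..l. ?\<kappa> i * (?z i \<bullet> (Qf i *v ?z i) - c i * (?z i \<bullet> ?z i))) + (\<Sum>i=1..l. c i)"
    proof (rule obj_kappa[OF _ symQ])
      show "\<forall>a b. V a b = V b a" by (simp add: V_def mult.commute)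
      show "\<forall>i\<in>{1..l}. \<forall>r<4. \<forall>s<4. V (4*i+s) r = ?\<kappa> i * comp4 (?z i) s * comp4 (?z i) r"
      proof (intro ballI allI impI)
        fix i r s :: nat assume i: "i \<in> {1..l}" and r: "r < 4" and s: "s < 4"
        show "V (4*i+s) r = ?\<kappa> i * comp4 (?z i) s * comp4 (?z i) r"
        proof (cases "i \<le> k")
          case True then show ?thesis using i r s G1r G1i by (simp add: V_def)
        next
          case False
          have i1: "1 \<le> i" "i \<le> l" using i by auto
          have e: "G1 r = comp4 u r" "G2 r = g * (comp4 v r - \<rho> * comp4 u r)"
            "G1 (4*i+s) = g*g*\<rho>/N * comp4 v s" "G2 (4*i+s) = g/N * comp4 v s"
            using G1r[OF r] qc G1i[OF s i1] False by auto
          show ?thesis unfolding V_def e blk_alg(3)[OF N_def] using False by simp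
        qed
      qed
    qed
    also have "(\<Sum>i=1..l. ?\<kappa> i * (?z i \<bullet> (Qf i *v ?z i) - c i * (?z i \<bullet> ?z i))) = - Cin / T - g^2 * Cout / (N*T)"
    proof -
      have a: "(\<Sum>i=1..k. ?\<kappa> i * (?z i \<bullet> (Qf i *v ?z i) - c i * (?z i \<bullet> ?z i))) = (\<Sum>i=1..k. - c i / T)"
        using Qu uu by (intro sum.cong refl) simp
      have b: "(\<Sum>i=k+1..l. ?\<kappa> i * (?z i \<bullet> (Qf i *v ?z i) - c i * (?z i \<bullet> ?z i))) = (\<Sum>i=k+1..l. - (g^2/(N*T)) * c i)"
        using Qv vv by (intro sum.cong refl) auto
      show ?thesis using split_sum[OF assms(3)] a b
        by (simp add: Cin_def Cout_def sum_negf sum_divide_distrib[symmetric] sum_distrib_left[symmetric])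
    qed
    finally show ?thesis .
  qed
  have "sdr_obj l c Qf (W_star w0s k) \<le> sdr_obj l c Qf V"
    using gm feas unfolding sdr_global_min_def by blast
  moreover have "- Cin / T - g^2 * Cout / (N*T) < - Cin"
    using final_ineq[of \<rho> Cin Cout] \<rho>0 \<rho>1 assms(6,11) \<rho>abs
    unfolding g_def N_def T_def Cin_def Cout_def by simp
  ultimately show False using objW objV by simp
qed

end
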